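(* Let $A$ be an abelian surface over $\mathbb{C}$ admitting two different principal polarizations $\theta \neq \theta' \in \mathrm{NS}(A)$. Then $A$ admits real multiplication.
   Context: An abelian surface $A$ over $\mathbb{C}$ admits real multiplication if the ring $\mathrm{End}_{\mathbb{Q}}(A) = \mathrm{End}(A) \otimes_{\mathbb{Z}} \mathbb{Q}$ contains a subring isomorphic to $\mathbb{Q}(\sqrt{d})$ for some integer $d \geq 2$ that is not a square. *)

theory Defs
  imports "HOL-Analysis.Analysis"
begin

text \<open>Analytic (Appell--Humbert) model of complex abelian surfaces.
  V = C^2 is modelled as complex \<times> complex; a complex torus is V/L for a lattice L.\<close>

type_synonym cvec = "complex \<times> complex"

definition cscale :: "complex \<Rightarrow> cvec \<Rightarrow> cvec" where
  "cscale c v = (c * fst v, c * snd v)"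

definition is_lattice :: "cvec set \<Rightarrow> bool" where
  "is_lattice L \<longleftrightarrow> (\<exists>b :: nat \<Rightarrow> cvec. inj_on b {..<4} \<and> independent (b ` {..<4}) \<and>
      L = {(\<Sum>i<4. of_int (n i) *\<^sub>R b i) | n :: nat \<Rightarrow> int. True})"

definition hermitian_form :: "(cvec \<Rightarrow> cvec \<Rightarrow> complex) \<Rightarrow> bool" where
  "hermitian_form H \<longleftrightarrow>
     (\<forall>x x' y. H (x + x') y = H x y + H x' y) \<and>
     (\<forall>c x y. H (cscale c x) y = c * H x y) \<and>
     (\<forall>x y. H y x = cnj (H x y))"

text \<open>Neron--Severi group of V/L (Appell--Humbert): Hermitian forms H with Im H integral on L.\<close>
definition NS :: "cvec set \<Rightarrow> (cvec \<Rightarrow> cvec \<Rightarrow> complex) set" where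
  "NS L = {H. hermitian_form H \<and> (\<forall>x\<in>L. \<forall>y\<in>L. Im (H x y) \<in> \<int>)}"

definition positive_definite :: "(cvec \<Rightarrow> cvec \<Rightarrow> complex) \<Rightarrow> bool" where
  "positive_definite H \<longleftrightarrow> (\<forall>x. x \<noteq> 0 \<longrightarrow> Re (H x x) > 0)"

definition polarization :: "cvec set \<Rightarrow> (cvec \<Rightarrow> cvec \<Rightarrow> complex) \<Rightarrow> bool" where
  "polarization L H \<longleftrightarrow> H \<in> NS L \<and> positive_definite H"

text \<open>Principal polarization: a polarization whose alternating form E = Im H is unimodular
  on L, i.e. x \<mapsto> E(x,-) maps L onto Hom(L,Z) (polarization isogeny A \<rightarrow> A^ is an isomorphism).\<close>
definition principal_polarization :: "cvec set \<Rightarrow> (cvec \<Rightarrow> cvec \<Rightarrow> complex) \<Rightarrow> bool" where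
  "principal_polarization L H \<longleftrightarrow> polarization L H \<and>
     (\<forall>\<phi> :: cvec \<Rightarrow> real.
        (\<forall>x\<in>L. \<forall>y\<in>L. \<phi> (x + y) = \<phi> x + \<phi> y) \<and> (\<forall>x\<in>L. \<phi> x \<in> \<int>) \<longrightarrow>
        (\<exists>x\<in>L. \<forall>y\<in>L. \<phi> y = Im (H x y)))"

definition abelian_surface :: "cvec set \<Rightarrow> bool" where
  "abelian_surface L \<longleftrightarrow> is_lattice L \<and> (\<exists>H. polarization L H)"

definition latQ :: "cvec set \<Rightarrow> cvec set" where
  "latQ L = {x. \<exists>n::nat. n > 0 \<and> of_nat n *\<^sub>R x \<in> L}"

definition C_linear :: "(cvec \<Rightarrow> cvec) \<Rightarrow> bool" where
  "C_linear f \<longleftrightarrow> (\<forall>x y. f (x + y) = f x + f y) \<and> (\<forall>c x. f (cscale c x) = cscale c (f x))"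

text \<open>End_Q(A) = End(A) \<otimes> Q: C-linear maps of V preserving L \<otimes> Q.\<close>
definition EndQ :: "cvec set \<Rightarrow> (cvec \<Rightarrow> cvec) set" where
  "EndQ L = {f. C_linear f \<and> f ` latQ L \<subseteq> latQ L}"

text \<open>Q(sqrt d) modelled as Q \<times> Q, (a,b) = a + b sqrt d.\<close>
definition qd_mult :: "int \<Rightarrow> rat \<times> rat \<Rightarrow> rat \<times> rat \<Rightarrow> rat \<times> rat" where
  "qd_mult d x y = (fst x * fst y + of_int d * snd x * snd y, fst x * snd y + snd x * fst y)"

definition real_multiplication :: "cvec set \<Rightarrow> bool" where
  "real_multiplication L \<longleftrightarrow> (\<exists>d::int. d \<ge> 2 \<and> (\<nexists>k::int. d = k^2) \<and>
     (\<exists>\<iota> :: rat \<times> rat \<Rightarrow> (cvec \<Rightarrow> cvec).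
        (\<forall>z. \<iota> z \<in> EndQ L) \<and> inj \<iota> \<and> \<iota> (1, 0) = id \<and>
        (\<forall>z w. \<iota> (z + w) = (\<lambda>v. \<iota> z v + \<iota> w v)) \<and>
        (\<forall>z w. \<iota> (qd_mult d z w) = \<iota> z \<circ> \<iota> w)))"

end

theory Submission
  imports Defs
begin


lemma herm_add1: "hermitian_form H \<Longrightarrow> H (x + x') y = H x y + H x' y"
  unfolding hermitian_form_def by blast
lemma herm_scale1: "hermitian_form H \<Longrightarrow> H (cscale c x) y = c * H x y"
  unfolding hermitian_form_def by blast
lemma herm_sym: "hermitian_form H \<Longrightarrow> H y x = cnj (H x y)"
  unfolding hermitian_form_def by blast
lemma herm_add2: "hermitian_form H \<Longrightarrow> H x (y + y') = H x y + H x y'"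
  by (metis herm_add1 herm_sym complex_cnj_add)
lemma herm_scale2: "hermitian_form H \<Longrightarrow> H x (cscale c y) = cnj c * H x y"
  by (metis herm_scale1 herm_sym complex_cnj_mult complex_cnj_cnj)
lemma herm_zero1: "hermitian_form H \<Longrightarrow> H 0 y = 0"
  using herm_add1[of H 0 0 y] by simp
lemma herm_neg1: "hermitian_form H \<Longrightarrow> H (- x) y = - H x y"
  using herm_add1[of H x "-x" y] herm_zero1[of H y] by (simp add: eq_neg_iff_add_eq_0 add.commute)
lemma herm_diff1: "hermitian_form H \<Longrightarrow> H (x - x') y = H x y - H x' y"
  using herm_add1[of H x "-x'" y] herm_neg1[of H x' y] by simp
lemma herm_zero2: "hermitian_form H \<Longrightarrow> H x 0 = 0"
  by (metis herm_sym herm_zero1 complex_cnj_zero)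
lemma herm_neg2: "hermitian_form H \<Longrightarrow> H x (- y) = - H x y"
  by (metis herm_sym herm_neg1 complex_cnj_minus)
lemma herm_diff2: "hermitian_form H \<Longrightarrow> H x (y - y') = H x y - H x y'"
  by (metis herm_sym herm_diff1 complex_cnj_diff)

lemma scaleR_cscale: "r *\<^sub>R (v::cvec) = cscale (of_real r) v"
  by (cases v) (simp add: cscale_def scaleR_conv_of_real)

lemma herm_scaleR2: "hermitian_form H \<Longrightarrow> H x (r *\<^sub>R y) = of_real r * H x y"
  by (simp add: scaleR_cscale herm_scale2)
lemma herm_scaleR1: "hermitian_form H \<Longrightarrow> H (r *\<^sub>R x) y = of_real r * H x y"
  by (simp add: scaleR_cscale herm_scale1)

lemma herm_real: "hermitian_form H \<Longrightarrow> cnj (H x x) = H x x"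
  by (metis herm_sym)

lemma herm_expand:
  assumes "hermitian_form H"
  shows "H x y = fst x * cnj (fst y) * H (1,0) (1,0) + fst x * cnj (snd y) * H (1,0) (0,1)
     + snd x * cnj (fst y) * H (0,1) (1,0) + snd x * cnj (snd y) * H (0,1) (0,1)"
proof -
  have dx: "x = cscale (fst x) (1,0) + cscale (snd x) (0,1)" by (cases x) (simp add: cscale_def)
  have dy: "y = cscale (fst y) (1,0) + cscale (snd y) (0,1)" by (cases y) (simp add: cscale_def)
  have "H x y = H (cscale (fst x) (1,0) + cscale (snd x) (0,1)) (cscale (fst y) (1,0) + cscale (snd y) (0,1))"
    using dx dy by simp
  also have "\<dots> = fst x * cnj (fst y) * H (1,0) (1,0) + fst x * cnj (snd y) * H (1,0) (0,1)
     + snd x * cnj (fst y) * H (0,1) (1,0) + snd x * cnj (snd y) * H (0,1) (0,1)"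
    by (simp add: herm_add1[OF assms] herm_add2[OF assms] herm_scale1[OF assms] herm_scale2[OF assms] algebra_simps)
  finally show ?thesis .
qed

lemma posdef_Im_zero:
  assumes "hermitian_form H" "positive_definite H" "\<forall>y. Im (H w y) = 0"
  shows "w = 0"
proof (rule ccontr)
  assume "w \<noteq> 0"
  hence "Re (H w w) > 0" using assms(2) unfolding positive_definite_def by blast
  moreover have "H w (cscale \<i> w) = - \<i> * H w w" by (simp add: herm_scale2[OF assms(1)])
  hence "Im (H w (cscale \<i> w)) = - Re (H w w)" by simp
  ultimately show False using assms(3) by auto
qed

lemma posdef_zero:
  assumes "hermitian_form H" "positive_definite H" "\<forall>y. H w y = 0"
  shows "w = 0"
  using posdef_Im_zero[OF assms(1,2)] assms(3) by simp



lemma herm_diag_real: "hermitian_form H \<Longrightarrow> H v v = of_real (Re (H v v))"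
  using herm_real[of H v] by (simp add: complex_eq_iff)

lemma herm_offdiag: "hermitian_form H \<Longrightarrow> H (0,1) (1,0) = cnj (H (1,0) (0,1))"
  by (rule herm_sym)

lemma delta_nonzero:
  assumes H: "hermitian_form H" and P: "positive_definite H"
  shows "H (1,0) (1,0) * H (0,1) (0,1) - H (0,1) (1,0) * H (1,0) (0,1) \<noteq> 0"
proof
  let ?h11 = "H (1,0) (1,0)" and ?h12 = "H (1,0) (0,1)" and ?h21 = "H (0,1) (1,0)" and ?h22 = "H (0,1) (0,1)"
  assume D: "?h11 * ?h22 - ?h21 * ?h12 = 0"
  have p: "Re ?h11 > 0" using P unfolding positive_definite_def by (metis prod.inject zero_prod_def zero_neq_one)
  define x where "x = (- ?h21, ?h11)"
  have x0: "x \<noteq> 0" using p by (auto simp: x_def zero_prod_def)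
  have c11: "cnj ?h11 = ?h11" using herm_real[OF H] by blast
  have c21: "cnj ?h21 = ?h12" using herm_sym[OF H] by (metis complex_cnj_cnj)
  have "H x x = ?h11 * (?h11 * ?h22 - ?h21 * ?h12)"
    unfolding herm_expand[OF H, of x x] by (simp add: x_def c11 c21 algebra_simps)
  hence "H x x = 0" using D by simp
  moreover have "Re (H x x) > 0" using P x0 unfolding positive_definite_def by blast
  ultimately show False by simp
qed

lemma C_linear_scaleR: "C_linear f \<Longrightarrow> f (r *\<^sub>R x) = r *\<^sub>R f x"
  unfolding C_linear_def scaleR_cscale by blast




lemma exists_alpha:
  assumes H1: "hermitian_form H1" and H2: "hermitian_form H2" and P1: "positive_definite H1"
  shows "\<exists>\<alpha>. C_linear \<alpha> \<and> (\<forall>x y. H2 x y = H1 (\<alpha> x) y) \<and>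
            (\<exists>s t::real. \<forall>x. \<alpha> (\<alpha> x) = s *\<^sub>R \<alpha> x - t *\<^sub>R x)"
proof -
  define h11 where "h11 = H1 (1,0) (1,0)"
  define h12 where "h12 = H1 (1,0) (0,1)"
  define h21 where "h21 = H1 (0,1) (1,0)"
  define h22 where "h22 = H1 (0,1) (0,1)"
  define g11 where "g11 = H2 (1,0) (1,0)"
  define g12 where "g12 = H2 (1,0) (0,1)"
  define g21 where "g21 = H2 (0,1) (1,0)"
  define g22 where "g22 = H2 (0,1) (0,1)"
  define D where "D = h11 * h22 - h21 * h12"
  have D0: "D \<noteq> 0" using delta_nonzero[OF H1 P1] by (simp add: D_def h11_def h12_def h21_def h22_def)
  define a where "a = (g11 * h22 - g12 * h21) / D"
  define b where "b = (g21 * h22 - g22 * h21) / D"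
  define c where "c = (g12 * h11 - g11 * h12) / D"
  define d where "d = (g22 * h11 - g21 * h12) / D"
  define \<alpha> where "\<alpha> = (\<lambda>x::cvec. (a * fst x + b * snd x, c * fst x + d * snd x))"
  have lin: "C_linear \<alpha>" by (auto simp: C_linear_def \<alpha>_def cscale_def algebra_simps)
  have e1: "(a * x1 + b * x2) * h11 + (c * x1 + d * x2) * h21 = x1 * g11 + x2 * g21" for x1 x2
    using D0 unfolding a_def b_def c_def d_def D_def by (simp add: divide_simps) (simp add: algebra_simps)
  have e2: "(a * x1 + b * x2) * h12 + (c * x1 + d * x2) * h22 = x1 * g12 + x2 * g22" for x1 x2
    using D0 unfolding a_def b_def c_def d_def D_def by (simp add: divide_simps) (simp add: algebra_simps)
  have rep: "H2 x y = H1 (\<alpha> x) y" for x y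
  proof -
    have "H1 (\<alpha> x) y = cnj (fst y) * ((a * fst x + b * snd x) * h11 + (c * fst x + d * snd x) * h21)
          + cnj (snd y) * ((a * fst x + b * snd x) * h12 + (c * fst x + d * snd x) * h22)"
      unfolding herm_expand[OF H1, of "\<alpha> x" y] by (simp add: \<alpha>_def h11_def h12_def h21_def h22_def algebra_simps)
    also have "\<dots> = H2 x y"
      unfolding e1 e2 herm_expand[OF H2, of x y] by (simp add: g11_def g12_def g21_def g22_def algebra_simps)
    finally show ?thesis by simp
  qed
  have c11: "cnj h11 = h11" "cnj h22 = h22" "cnj g11 = g11" "cnj g22 = g22"
    using herm_real[OF H1] herm_real[OF H2] by (auto simp: h11_def h22_def g11_def g22_def)
  have c12: "cnj h21 = h12" "cnj g21 = g12" "cnj h12 = h21" "cnj g12 = g21"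
    using herm_sym[OF H1, of "(1,0)" "(0,1)"] herm_sym[OF H2, of "(1,0)" "(0,1)"]
    by (auto simp: h12_def h21_def g12_def g21_def)
  have cD: "cnj D = D" by (simp add: D_def c11 c12 mult.commute)
  have sreal: "cnj (a + d) = a + d"
    unfolding a_def d_def by (simp add: c11 c12 cD add_divide_distrib[symmetric] algebra_simps)
  have tform: "a * d - b * c = (g11 * g22 - g21 * g12) / D"
    using D0 unfolding a_def b_def c_def d_def D_def by (simp add: divide_simps) (simp add: algebra_simps)
  have treal: "cnj (a * d - b * c) = a * d - b * c"
    unfolding tform by (simp add: c11 c12 cD mult.commute)
  have cr: "\<And>z::complex. cnj z = z \<Longrightarrow> z = of_real (Re z)" by (simp add: complex_eq_iff)
  obtain s where s: "a + d = of_real s" using cr[OF sreal] by blast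
  obtain t where t: "a * d - b * c = of_real t" using cr[OF treal] by blast
  have ch: "\<alpha> (\<alpha> x) = s *\<^sub>R \<alpha> x - t *\<^sub>R x" for x
    by (simp add: \<alpha>_def prod_eq_iff scaleR_conv_of_real s[symmetric] t[symmetric] algebra_simps)
  show ?thesis using lin rep ch by blast
qed




locale lat =
  fixes L :: "cvec set" and b :: "nat \<Rightarrow> cvec"
  assumes b_inj: "inj_on b {..<4}" and b_ind: "independent (b ` {..<4})"
    and L_eq: "L = {(\<Sum>i<4. of_int (n i) *\<^sub>R b i) | n :: nat \<Rightarrow> int. True}"
begin

abbreviation "B \<equiv> b ` {..<4}"

lemma span_B: "span B = UNIV"
proof -
  have "card B = 4" using b_inj by (simp add: card_image)
  hence "UNIV \<subseteq> span B" using card_eq_dim[of B UNIV] b_ind by simp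
  thus ?thesis by auto
qed

definition co :: "nat \<Rightarrow> cvec \<Rightarrow> real" where "co j v = representation B v (b j)"

lemma co_add: "co j (u + v) = co j u + co j v"
  unfolding co_def using representation_add[OF b_ind] span_B by simp

lemma co_scale: "co j (r *\<^sub>R v) = r * co j v"
  unfolding co_def using representation_scale[OF b_ind] span_B by simp

lemma co_diff: "co j (u - v) = co j u - co j v"
  unfolding co_def using representation_diff[OF b_ind] span_B by simp

lemma co_b: "i < 4 \<Longrightarrow> j < 4 \<Longrightarrow> co j (b i) = (if i = j then 1 else 0)"
  unfolding co_def using representation_basis[OF b_ind, of "b i"] b_inj
  by (auto simp: inj_on_eq_iff)

lemma expand: "v = (\<Sum>j<4. co j v *\<^sub>R b j)"
proof -
  have "(\<Sum>x\<in>B. representation B v x *\<^sub>R x) = v"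
    using sum_representation_eq[OF b_ind, of v B] span_B by simp
  moreover have "(\<Sum>x\<in>B. representation B v x *\<^sub>R x) = (\<Sum>j<4. co j v *\<^sub>R b j)"
    unfolding co_def by (subst sum.reindex[OF b_inj]) simp
  ultimately show ?thesis by simp
qed

lemma co_zero: "co j 0 = 0"
  using co_scale[of j 0 0] by simp

lemma co_sum: "co j (\<Sum>i\<in>I. f i) = (\<Sum>i\<in>I. co j (f i))"
  by (induction I rule: infinite_finite_induct) (auto simp: co_add co_zero)

lemma L_co: "v \<in> L \<Longrightarrow> j < 4 \<Longrightarrow> co j v \<in> \<int>"
proof -
  assume "v \<in> L" "j < 4"
  then obtain n where v: "v = (\<Sum>i<4. of_int (n i) *\<^sub>R b i)" using L_eq by auto
  have "co j v = (\<Sum>i<4. of_int (n i) * co j (b i))" unfolding v co_sum co_scale ..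
  also have "\<dots> = (\<Sum>i<4. if i = j then of_int (n j) else 0)"
    by (rule sum.cong) (use \<open>j < 4\<close> co_b in auto)
  also have "\<dots> = of_int (n j)" using \<open>j<4\<close> by simp
  finally show ?thesis by simp
qed

lemma co_L: "(\<And>j. j < 4 \<Longrightarrow> co j v \<in> \<int>) \<Longrightarrow> v \<in> L"
proof -
  assume h: "\<And>j. j < 4 \<Longrightarrow> co j v \<in> \<int>"
  define n where "n j = (if j < 4 then (SOME k. co j v = of_int k) else 0)" for j
  have "co j v = of_int (n j)" if "j < 4" for j
    using h[OF that] unfolding n_def using that by (auto elim!: Ints_cases intro: someI)
  hence "(\<Sum>j<4. co j v *\<^sub>R b j) = (\<Sum>i<4. of_int (n i) *\<^sub>R b i)"
    by (intro sum.cong) auto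
  hence "v = (\<Sum>i<4. of_int (n i) *\<^sub>R b i)" using expand[of v] by simp
  thus "v \<in> L" using L_eq by auto
qed

lemma L_add: "u \<in> L \<Longrightarrow> v \<in> L \<Longrightarrow> u + v \<in> L"
  by (rule co_L) (simp add: co_add L_co)
lemma L_diff: "u \<in> L \<Longrightarrow> v \<in> L \<Longrightarrow> u - v \<in> L"
  by (rule co_L) (simp add: co_diff L_co)
lemma L_int_scale: "u \<in> L \<Longrightarrow> k \<in> \<int> \<Longrightarrow> k *\<^sub>R u \<in> L"
  by (rule co_L) (simp add: co_scale L_co)
lemma b_L: "i < 4 \<Longrightarrow> b i \<in> L"
  by (rule co_L) (simp add: co_b)

lemma b_nz: "i < 4 \<Longrightarrow> b i \<noteq> 0"
proof
  assume "i < 4" "b i = 0"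
  have "b i \<in> B" using \<open>i < 4\<close> by simp
  hence "0 \<in> B" using \<open>b i = 0\<close> by simp
  hence "dependent B" by (rule real_vector.dependent_zero)
  thus False using b_ind by simp
qed

lemma linear_zero_on_b:
  fixes f :: "cvec \<Rightarrow> real"
  assumes add: "\<And>u v. f (u + v) = f u + f v" and sc: "\<And>r u. f (r *\<^sub>R u) = r * f u"
    and z: "\<And>i. i < 4 \<Longrightarrow> f (b i) = 0"
  shows "f v = 0"
proof -
  have f0: "f 0 = 0" using add[of 0 0] by simp
  have fs: "f (\<Sum>i\<in>I. g i) = (\<Sum>i\<in>I. f (g i))" for g and I :: "nat set"
    by (induction I rule: infinite_finite_induct) (auto simp: add f0)
  have "f v = f (\<Sum>j<4. co j v *\<^sub>R b j)" using expand[of v] by simp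
  also have "\<dots> = 0" by (simp add: fs sc z)
  finally show ?thesis .
qed

end



lemma C_add: "C_linear f \<Longrightarrow> f (x + y) = f x + f y"
  unfolding C_linear_def by blast
lemma C_zero: "C_linear f \<Longrightarrow> f 0 = 0"
  using C_add[of f 0 0] by simp
lemma C_diff: "C_linear f \<Longrightarrow> f (x - y) = f x - f y"
  using C_add[of f "x - y" y] by (simp add: eq_diff_eq)

lemma cscale_scaleR: "cscale c (r *\<^sub>R v) = r *\<^sub>R cscale c v"
  by (cases v) (simp add: cscale_def scaleR_conv_of_real)
lemma cscale_add: "cscale c (u + v) = cscale c u + cscale c v"
  by (cases u, cases v) (simp add: cscale_def algebra_simps)

lemma C_linear_comb:
  assumes "C_linear f" "C_linear g"
  shows "C_linear (\<lambda>v. r *\<^sub>R f v + r' *\<^sub>R g v)"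
  using assms unfolding C_linear_def
  by (simp add: cscale_scaleR cscale_add algebra_simps)

context lat begin

lemma alpha_L:
  assumes P1: "principal_polarization L H1" and H2: "H2 \<in> NS L"
    and rep: "\<And>x y. H2 x y = H1 (\<alpha> x) y"
    and x: "x \<in> L"
  shows "\<alpha> x \<in> L"
proof -
  have H1: "hermitian_form H1" and pd1: "positive_definite H1"
    using P1 by (auto simp: principal_polarization_def polarization_def NS_def)
  have h2: "hermitian_form H2" and int2: "\<forall>x\<in>L. \<forall>y\<in>L. Im (H2 x y) \<in> \<int>" using H2 by (auto simp: NS_def)
  let ?\<phi> = "\<lambda>y. Im (H2 x y)"
  have "(\<forall>u\<in>L. \<forall>v\<in>L. ?\<phi> (u + v) = ?\<phi> u + ?\<phi> v) \<and> (\<forall>u\<in>L. ?\<phi> u \<in> \<int>)"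
    using herm_add2[OF h2] int2 x by simp
  moreover have "\<forall>\<phi> :: cvec \<Rightarrow> real.
        (\<forall>x\<in>L. \<forall>y\<in>L. \<phi> (x + y) = \<phi> x + \<phi> y) \<and> (\<forall>x\<in>L. \<phi> x \<in> \<int>) \<longrightarrow>
        (\<exists>x\<in>L. \<forall>y\<in>L. \<phi> y = Im (H1 x y))" using P1 unfolding principal_polarization_def by blast
  ultimately have "\<exists>x'\<in>L. \<forall>y\<in>L. ?\<phi> y = Im (H1 x' y)" by (rule rev_mp[OF _ spec[of _ ?\<phi>]]) 
  then obtain x' where x': "x' \<in> L" "\<forall>y\<in>L. Im (H2 x y) = Im (H1 x' y)" by blast
  define w where "w = \<alpha> x - x'"
  have "Im (H1 w y) = 0" for y
  proof (rule linear_zero_on_b[where f = "\<lambda>y. Im (H1 w y)"])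
    show "Im (H1 w (u + v)) = Im (H1 w u) + Im (H1 w v)" for u v by (simp add: herm_add2[OF H1])
    show "Im (H1 w (r *\<^sub>R u)) = r * Im (H1 w u)" for r u by (simp add: herm_scaleR2[OF H1])
    show "Im (H1 w (b i)) = 0" if "i < 4" for i
      using x'(2) b_L[OF that] by (simp add: w_def herm_diff1[OF H1] rep[symmetric])
  qed
  hence "w = 0" using posdef_Im_zero[OF H1 pd1] by blast
  thus ?thesis using x' by (simp add: w_def)
qed

end



locale rmset = lat +
  fixes th th' :: "cvec \<Rightarrow> cvec \<Rightarrow> complex" and \<alpha> \<alpha>' :: "cvec \<Rightarrow> cvec" and s t :: real
  assumes h1: "hermitian_form th" and h2: "hermitian_form th'"
    and pd1: "positive_definite th" and pd2: "positive_definite th'"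
    and lin: "C_linear \<alpha>" and lin': "C_linear \<alpha>'"
    and rep: "\<And>x y. th' x y = th (\<alpha> x) y" and rep': "\<And>x y. th x y = th' (\<alpha>' x) y"
    and aL: "\<And>x. x \<in> L \<Longrightarrow> \<alpha> x \<in> L" and aL': "\<And>x. x \<in> L \<Longrightarrow> \<alpha>' x \<in> L"
    and ch: "\<And>x. \<alpha> (\<alpha> x) = s *\<^sub>R \<alpha> x - t *\<^sub>R x"
    and neq: "th \<noteq> th'"
begin

lemma th_pos: "v \<noteq> 0 \<Longrightarrow> Re (th v v) > 0" using pd1 unfolding positive_definite_def by blast
lemma th'_pos: "v \<noteq> 0 \<Longrightarrow> Re (th' v v) > 0" using pd2 unfolding positive_definite_def by blast

lemma inv1: "\<alpha> (\<alpha>' x) = x"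
proof -
  have "th (\<alpha> (\<alpha>' x) - x) y = 0" for y
    by (simp add: herm_diff1[OF h1] rep'[of x y] rep[of "\<alpha>' x" y])
  hence "\<forall>y. th (\<alpha> (\<alpha>' x) - x) y = 0" by blast
  from posdef_zero[OF h1 pd1 this] show ?thesis by simp
qed

lemma inv2: "\<alpha>' (\<alpha> x) = x"
proof -
  have "th' (\<alpha>' (\<alpha> x) - x) y = 0" for y
    by (simp add: herm_diff1[OF h2] rep'[of "\<alpha> x" y, symmetric] rep[of x y])
  hence "\<forall>y. th' (\<alpha>' (\<alpha> x) - x) y = 0" by blast
  from posdef_zero[OF h2 pd2 this] show ?thesis by simp
qed

lemma selfadj: "th (\<alpha> x) y = th x (\<alpha> y)"
  by (metis rep herm_sym[OF h1] herm_sym[OF h2])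

lemma aR: "\<alpha> (r *\<^sub>R x) = r *\<^sub>R \<alpha> x" using C_linear_scaleR[OF lin] .
lemma aR': "\<alpha>' (r *\<^sub>R x) = r *\<^sub>R \<alpha>' x" using C_linear_scaleR[OF lin'] .
lemma aadd: "\<alpha> (x + y) = \<alpha> x + \<alpha> y" using C_add[OF lin] .
lemma adiff: "\<alpha> (x - y) = \<alpha> x - \<alpha> y" using C_diff[OF lin] .

lemma not_id: "\<not> (\<forall>v. \<alpha> v = v)"
proof
  assume a: "\<forall>v. \<alpha> v = v"
  have "th' x y = th x y" for x y using rep[of x y] a by metis
  hence "th' = th" by (intro ext)
  thus False using neq by simp
qed

lemma eig:
  assumes y: "y \<in> L" "y \<noteq> 0" and ey: "\<alpha> y = l *\<^sub>R y"
  shows "l = 1"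
proof -
  have "Re (th' y y) > 0" "Re (th y y) > 0" using th_pos th'_pos y by auto
  moreover have "th' y y = of_real l * th y y" using rep ey by (simp add: herm_scaleR1[OF h1])
  ultimately have lpos: "l > 0" by (simp add: zero_less_mult_iff)
  have ey': "\<alpha>' y = (1/l) *\<^sub>R y"
  proof -
    have "y = \<alpha>' (l *\<^sub>R y)" using inv2[of y] ey by simp
    hence "y = l *\<^sub>R \<alpha>' y" by (simp add: aR')
    hence "(1/l) *\<^sub>R y = (1/l) *\<^sub>R (l *\<^sub>R \<alpha>' y)" by simp
    also have "\<dots> = \<alpha>' y" using lpos by simp
    finally show ?thesis by simp
  qed
  have p1: "l ^ k *\<^sub>R y \<in> L" for k
  proof (induction k)
    case 0 thus ?case using y by simp
  next
    case (Suc k)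
    have "\<alpha> (l ^ k *\<^sub>R y) = l ^ Suc k *\<^sub>R y" by (simp add: aR ey)
    thus ?case using aL[OF Suc] by simp
  qed
  have p2: "(1/l) ^ k *\<^sub>R y \<in> L" for k
  proof (induction k)
    case 0 thus ?case using y by simp
  next
    case (Suc k)
    have "\<alpha>' ((1/l) ^ k *\<^sub>R y) = (1/l) ^ Suc k *\<^sub>R y" by (simp add: aR' ey')
    thus ?case using aL'[OF Suc] by simp
  qed
  obtain j where j: "j < 4" "co j y \<noteq> 0"
  proof -
    have "\<exists>j<4. co j y \<noteq> 0"
    proof (rule ccontr)
      assume "\<not> ?thesis"
      hence "y = 0" using expand[of y] by simp
      thus False using y by simp
    qed
    thus ?thesis using that by blast
  qed
  define n where "n = co j y"
  have i1: "l ^ k * n \<in> \<int>" for k using L_co[OF p1 j(1)] by (simp add: co_scale n_def)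
  have i2: "(1/l) ^ k * n \<in> \<int>" for k using L_co[OF p2 j(1)] by (simp add: co_scale n_def)
  have nz: "n \<noteq> 0" using j n_def by simp
  have ge: "\<bar>x ^ k * n\<bar> \<ge> 1" if "x > 0" "x ^ k * n \<in> \<int>" for x k
    using Ints_nonzero_abs_ge1[OF that(2)] nz that(1) by simp
  show "l = 1"
  proof (rule ccontr)
    assume "l \<noteq> 1"
    then consider "l < 1" | "l > 1" by linarith
    thus False
    proof cases
      case 1
      obtain k where "l ^ k < 1 / \<bar>n\<bar>" using real_arch_pow_inv[of "1/\<bar>n\<bar>" l] 1 nz by auto
      hence "\<bar>l ^ k * n\<bar> < 1" using nz lpos by (simp add: abs_mult field_simps)
      thus False using ge[OF lpos i1[of k]] by linarith
    next
      case 2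
      have "1/l < 1" using 2 by simp
      then obtain k where "(1/l) ^ k < 1 / \<bar>n\<bar>" using real_arch_pow_inv[of "1/\<bar>n\<bar>" "1/l"] nz by auto
      hence "\<bar>(1/l) ^ k * n\<bar> < 1" using nz lpos by (simp add: abs_mult field_simps)
      thus False using ge[of "1/l" k, OF _ i2[of k]] lpos by simp
    qed
  qed
qed

lemma scalar_contra:
  assumes "\<And>i. i < 4 \<Longrightarrow> \<alpha> (b i) = k *\<^sub>R b i"
  shows False
proof -
  have all: "\<alpha> v = k *\<^sub>R v" for v
  proof -
    have "co j (\<alpha> v - k *\<^sub>R v) = 0" for j
    proof (rule linear_zero_on_b[where f="\<lambda>v. co j (\<alpha> v - k *\<^sub>R v)"])
      show "co j (\<alpha> (u + w) - k *\<^sub>R (u + w)) = co j (\<alpha> u - k *\<^sub>R u) + co j (\<alpha> w - k *\<^sub>R w)" for u w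
        by (simp add: aadd co_add co_diff co_scale algebra_simps)
      show "co j (\<alpha> (r *\<^sub>R u) - k *\<^sub>R (r *\<^sub>R u)) = r * co j (\<alpha> u - k *\<^sub>R u)" for r u
        by (simp add: aR co_diff co_scale algebra_simps)
      show "co j (\<alpha> (b i) - k *\<^sub>R b i) = 0" if "i < 4" for i
        using assms[OF that] by (simp add: co_zero)
    qed
    hence "\<alpha> v - k *\<^sub>R v = 0" using expand[of "\<alpha> v - k *\<^sub>R v"] by simp
    thus ?thesis by simp
  qed
  have "k = 1" using eig[OF b_L[of 0] b_nz[of 0] all] by simp
  thus False using not_id all by simp
qed


lemma st_rat: "s \<in> \<rat> \<and> t \<in> \<rat>"
proof -
  define m where "m i j = co j (\<alpha> (b i))" for i j
  define A where "A i j = co j (\<alpha> (\<alpha> (b i)))" for i j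
  have mI: "m i j \<in> \<int>" if "i < 4" "j < 4" for i j
    unfolding m_def using L_co[OF aL[OF b_L[OF that(1)]] that(2)] .
  have AI: "A i j \<in> \<int>" if "i < 4" "j < 4" for i j
    unfolding A_def using L_co[OF aL[OF aL[OF b_L[OF that(1)]]] that(2)] .
  have Aeq: "A i j = s * m i j - t * (if i = j then 1 else 0)" if "i < 4" "j < 4" for i j
    unfolding A_def m_def ch co_diff co_scale co_b[OF that] ..
  have IQ: "x \<in> \<int> \<Longrightarrow> x \<in> \<rat>" for x :: real by (metis Ints_cases Rats_of_int)
  have "(\<exists>i j. i < 4 \<and> j < 4 \<and> i \<noteq> j \<and> m i j \<noteq> 0) \<or> (\<exists>i j. i < 4 \<and> j < 4 \<and> m i i \<noteq> m j j) \<or>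
     ((\<forall>i j. i < 4 \<longrightarrow> j < 4 \<longrightarrow> i \<noteq> j \<longrightarrow> m i j = 0) \<and> (\<forall>i j. i < 4 \<longrightarrow> j < 4 \<longrightarrow> m i i = m j j))"
    by blast
  then consider (off) i j where "i < 4" "j < 4" "i \<noteq> j" "m i j \<noteq> 0"
    | (diag) i j where "i < 4" "j < 4" "m i i \<noteq> m j j"
    | (scal) "\<And>i j. i < 4 \<Longrightarrow> j < 4 \<Longrightarrow> i \<noteq> j \<Longrightarrow> m i j = 0" "\<And>i j. i < 4 \<Longrightarrow> j < 4 \<Longrightarrow> m i i = m j j"
    by (elim disjE exE conjE) blast+
  thus ?thesis
  proof cases
    case off
    have "s = A i j / m i j" using Aeq[OF off(1,2)] off by simp
    hence sQ: "s \<in> \<rat>" using IQ[OF AI[OF off(1,2)]] IQ[OF mI[OF off(1,2)]] by simp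
    have "t = s * m i i - A i i" using Aeq[OF off(1,1)] by simp
    hence "t \<in> \<rat>" using sQ IQ[OF AI[OF off(1,1)]] IQ[OF mI[OF off(1,1)]] by simp
    with sQ show ?thesis ..
  next
    case diag
    have "A i i - A j j = s * (m i i - m j j)" using Aeq[OF diag(1,1)] Aeq[OF diag(2,2)] by (simp add: algebra_simps)
    hence "s = (A i i - A j j) / (m i i - m j j)" using diag by simp
    hence sQ: "s \<in> \<rat>" using IQ[OF AI[OF diag(1,1)]] IQ[OF mI[OF diag(1,1)]]
      IQ[OF AI[OF diag(2,2)]] IQ[OF mI[OF diag(2,2)]] by simp
    have "t = s * m i i - A i i" using Aeq[OF diag(1,1)] by simp
    hence "t \<in> \<rat>" using sQ IQ[OF AI[OF diag(1,1)]] IQ[OF mI[OF diag(1,1)]] by simp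
    with sQ show ?thesis ..
  next
    case scal
    have "\<alpha> (b i) = m 0 0 *\<^sub>R b i" if "i < 4" for i
    proof -
      have "\<alpha> (b i) = (\<Sum>j<4. m i j *\<^sub>R b j)" unfolding m_def using expand .
      also have "\<dots> = (\<Sum>j<4. if j = i then m 0 0 *\<^sub>R b i else 0)"
      proof (rule sum.cong)
        fix j assume "j \<in> {..<4::nat}"
        hence "j < 4" by simp
        show "m i j *\<^sub>R b j = (if j = i then m 0 0 *\<^sub>R b i else 0)"
        proof (cases "j = i")
          case True thus ?thesis using scal(2)[OF that, of 0] by simp
        next
          case False thus ?thesis using scal(1)[OF that \<open>j < 4\<close>] by simp
        qed
      qed simp
      also have "\<dots> = m 0 0 *\<^sub>R b i" using that by simp
      finally show ?thesis .
    qed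
    hence False using scalar_contra by blast
    thus ?thesis ..
  qed
qed


lemma Re_complex_of_real_mult: "Re (of_real c * z) = c * Re z" by simp

definition "gm v = \<alpha> v - (s/2) *\<^sub>R v"

lemma gm_gm: "gm (gm v) = ((s^2 - 4*t)/4) *\<^sub>R v"
proof -
  have "gm (gm v) = (\<alpha> (\<alpha> v) - (s/2) *\<^sub>R \<alpha> v) - ((s/2) *\<^sub>R \<alpha> v - ((s/2) * (s/2)) *\<^sub>R v)"
    unfolding gm_def adiff aR by (simp add: scaleR_diff_right)
  also have "\<dots> = (s *\<^sub>R \<alpha> v - ((s/2) *\<^sub>R \<alpha> v + (s/2) *\<^sub>R \<alpha> v)) + (((s/2) * (s/2)) *\<^sub>R v - t *\<^sub>R v)"
    unfolding ch by (simp add: algebra_simps)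
  also have "(s/2) *\<^sub>R \<alpha> v + (s/2) *\<^sub>R \<alpha> v = s *\<^sub>R \<alpha> v" by (simp add: scaleR_add_left[symmetric])
  also have "((s/2) * (s/2)) *\<^sub>R v - t *\<^sub>R v = ((s^2 - 4*t)/4) *\<^sub>R v"
    by (simp add: scaleR_diff_left[symmetric] power2_eq_square field_simps)
  finally show ?thesis by simp
qed

lemma gm_selfadj: "th (gm x) y = th x (gm y)"
  unfolding gm_def by (simp add: herm_diff1[OF h1] herm_diff2[OF h1] herm_scaleR1[OF h1] herm_scaleR2[OF h1] selfadj)


lemma D_nonneg: "s^2 - 4*t \<ge> 0"
proof (rule ccontr)
  assume neg: "\<not> ?thesis"
  define v where "v = b 0"
  have v0: "v \<noteq> 0" using b_nz by (simp add: v_def)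
  have "th (gm v) (gm v) = th (gm (gm v)) v" using gm_selfadj by simp
  also have "\<dots> = of_real ((s^2 - 4*t)/4) * th v v" by (simp only: gm_gm herm_scaleR1[OF h1])
  finally have "Re (th (gm v) (gm v)) = Re (of_real ((s^2 - 4*t)/4) * th v v)" by (rule arg_cong)
  also have "\<dots> = (s^2 - 4*t)/4 * Re (th v v)" by (rule Re_complex_of_real_mult)
  finally have eq: "Re (th (gm v) (gm v)) = (s^2 - 4*t)/4 * Re (th v v)" .
  have "Re (th (gm v) (gm v)) \<ge> 0"
    using th_pos[of "gm v"] by (cases "gm v = 0") (auto simp: herm_zero1[OF h1])
  moreover have "(s^2 - 4*t)/4 * Re (th v v) < 0" using neg th_pos[OF v0] by (simp add: mult_neg_pos)
  ultimately show False using eq by simp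
qed

lemma root_one:
  assumes "\<mu> \<in> \<rat>" "\<nu> \<in> \<rat>" "\<mu> + \<nu> = s" "\<mu> * \<nu> = t"
  shows "\<mu> = 1"
proof -
  obtain i where i: "i < 4" "\<alpha> (b i) \<noteq> \<nu> *\<^sub>R b i" using scalar_contra by blast
  define w where "w = \<alpha> (b i) - \<nu> *\<^sub>R b i"
  have w0: "w \<noteq> 0" using i by (simp add: w_def)
  have aw: "\<alpha> w = \<mu> *\<^sub>R w"
    unfolding w_def adiff aR ch using assms(3,4)[symmetric] by (simp add: algebra_simps scaleR_diff_right)
  obtain p q where pq: "\<nu> = of_int p / of_int q" "q > 0" using assms(2) Rats_cases'
    by (metis of_int_of_nat_eq of_nat_0_less_iff)
  define y where "y = of_int q *\<^sub>R w"
  have "y = of_int q *\<^sub>R \<alpha> (b i) - of_int p *\<^sub>R b i" using pq by (simp add: y_def w_def scaleR_diff_right)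
  hence yL: "y \<in> L" using b_L[OF i(1)] aL by (simp add: L_diff L_int_scale)
  have y0: "y \<noteq> 0" using w0 pq by (simp add: y_def)
  have "\<alpha> y = \<mu> *\<^sub>R y" by (simp add: y_def aR aw)
  thus ?thesis using eig[OF yL y0] by simp
qed

lemma D_not_sq: "\<not> (\<exists>r\<in>\<rat>. s^2 - 4*t = r^2)"
proof
  assume "\<exists>r\<in>\<rat>. s^2 - 4*t = r^2"
  then obtain r where r: "r \<in> \<rat>" "s^2 - 4*t = r^2" by blast
  have sQ: "s \<in> \<rat>" using st_rat by simp
  have "(s + r)/2 = 1"
    by (rule root_one[of "(s + r)/2" "(s - r)/2"]) (use r sQ in \<open>auto simp: field_simps power2_eq_square\<close>)
  moreover have "(s - r)/2 = 1"
    by (rule root_one[of "(s - r)/2" "(s + r)/2"]) (use r sQ in \<open>auto simp: field_simps power2_eq_square\<close>)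
  ultimately have s2: "s = 2" and r0: "r = 0" by auto
  have t1: "t = 1" using r s2 r0 by simp
  have "gm v = 0" for v
  proof (rule ccontr)
    assume "gm v \<noteq> 0"
    hence "Re (th (gm v) (gm v)) > 0" by (rule th_pos)
    moreover have "th (gm v) (gm v) = th (gm (gm v)) v" using gm_selfadj by simp
    moreover have "gm (gm v) = 0" using gm_gm s2 t1 by simp
    ultimately show False by (simp add: herm_zero1[OF h1])
  qed
  hence "\<alpha> v - (s/2) *\<^sub>R v = 0" for v unfolding gm_def by blast
  hence "\<alpha> v = v" for v using s2 by simp
  thus False using not_id by blast
qed

end



context lat begin

lemma latQ_L: "x \<in> L \<Longrightarrow> x \<in> latQ L"
  unfolding latQ_def by (rule CollectI, rule exI[of _ 1]) simp

lemma latQ_add: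
  assumes "x \<in> latQ L" "y \<in> latQ L" shows "x + y \<in> latQ L"
proof -
  obtain n where n: "n > 0" "real n *\<^sub>R x \<in> L" using assms(1) unfolding latQ_def by auto
  obtain m where m: "m > 0" "real m *\<^sub>R y \<in> L" using assms(2) unfolding latQ_def by auto
  have "real (n * m) *\<^sub>R (x + y) = real m *\<^sub>R (real n *\<^sub>R x) + real n *\<^sub>R (real m *\<^sub>R y)"
    by (simp add: algebra_simps)
  moreover have "real m *\<^sub>R (real n *\<^sub>R x) \<in> L" by (rule L_int_scale[OF n(2)]) simp
  moreover have "real n *\<^sub>R (real m *\<^sub>R y) \<in> L" by (rule L_int_scale[OF m(2)]) simp
  ultimately have "real (n * m) *\<^sub>R (x + y) \<in> L" using L_add by metis
  thus ?thesis using n m unfolding latQ_def by (intro CollectI exI[of _ "n * m"]) simp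
qed

lemma latQ_scale:
  assumes "x \<in> latQ L" "r \<in> \<rat>" shows "r *\<^sub>R x \<in> latQ L"
proof -
  obtain n where n: "n > 0" "real n *\<^sub>R x \<in> L" using assms(1) unfolding latQ_def by auto
  obtain a c where ac: "c > 0" "r = of_int a / of_int c" using assms(2) Rats_cases' by metis
  have "real (n * nat c) *\<^sub>R (r *\<^sub>R x) = of_int a *\<^sub>R (real n *\<^sub>R x)"
    using ac by (simp add: field_simps)
  moreover have "of_int a *\<^sub>R (real n *\<^sub>R x) \<in> L" by (rule L_int_scale[OF n(2)]) simp
  ultimately have "real (n * nat c) *\<^sub>R (r *\<^sub>R x) \<in> L" by metis
  thus ?thesis using n ac unfolding latQ_def by (intro CollectI exI[of _ "n * nat c"]) simp
qed

lemma latQ_map: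
  assumes "\<And>r v. f (r *\<^sub>R v) = r *\<^sub>R f v" "\<And>v. v \<in> L \<Longrightarrow> f v \<in> L" "x \<in> latQ L"
  shows "f x \<in> latQ L"
proof -
  obtain n where n: "n > 0" "real n *\<^sub>R x \<in> L" using assms(3) unfolding latQ_def by auto
  have "real n *\<^sub>R f x \<in> L" using assms(2)[OF n(2)] assms(1) by simp
  thus ?thesis using n unfolding latQ_def by auto
qed

end

lemma C_linear_id: "C_linear id" by (simp add: C_linear_def)

context rmset begin

lemma gm_scale: "gm (r *\<^sub>R v) = r *\<^sub>R gm v"
  unfolding gm_def aR by (simp add: algebra_simps)

lemma final: "real_multiplication L"
proof -
  define D where "D = s^2 - 4*t"
  have DQ: "D \<in> \<rat>" using st_rat by (simp add: D_def)
  have Dns: "\<not> (\<exists>r\<in>\<rat>. D = r^2)" using D_not_sq by (simp add: D_def)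
  have Dpos: "D > 0"
  proof -
    have "D \<noteq> 0" using Dns by force
    thus ?thesis using D_nonneg by (simp add: D_def)
  qed
  obtain p q where pq: "q > 0" "D = of_int p / of_int q" using DQ Rats_cases' by metis
  have Dq: "D * of_int q = of_int p" using pq by simp
  have ppos: "p > 0" using pq Dpos by (simp add: zero_less_divide_iff)
  define d where "d = p * q"
  have sq: "\<nexists>k::int. d = k^2"
  proof
    assume "\<exists>k::int. d = k^2"
    then obtain k where k: "d = k^2" by blast
    have "real_of_int p * of_int q = of_int k * of_int k" using k unfolding d_def
      by (metis of_int_mult power2_eq_square)
    hence "D * (of_int q * of_int q) = of_int k * of_int k" using Dq by (metis mult.assoc)
    hence "D = (of_int k / of_int q)^2"
      using pq(1) by (simp add: power2_eq_square field_simps)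
    moreover have "of_int k / of_int q \<in> (\<rat> :: real set)" by simp
    ultimately show False using Dns by blast
  qed
  have d2: "d \<ge> 2"
  proof -
    have "d > 0" using ppos pq(1) by (simp add: d_def)
    hence "d \<ge> 1" by simp
    moreover have "d \<noteq> 1" using sq by (metis one_power2)
    ultimately show ?thesis by simp
  qed
  define \<beta> where "\<beta> v = (2 * of_int q) *\<^sub>R \<alpha> v + (- (of_int q * s)) *\<^sub>R v" for v
  have \<beta>gm: "\<beta> v = (2 * of_int q) *\<^sub>R gm v" for v
    by (simp add: \<beta>_def gm_def algebra_simps)
  have \<beta>lin: "C_linear \<beta>"
    unfolding \<beta>_def[abs_def] using C_linear_comb[OF lin C_linear_id, of "2 * of_int q" "- (of_int q * s)"]
    by (simp only: id_def)
  have \<beta>add: "\<beta> (u + v) = \<beta> u + \<beta> v" for u v using C_add[OF \<beta>lin] .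
  have \<beta>R: "\<beta> (r *\<^sub>R v) = r *\<^sub>R \<beta> v" for r v using C_linear_scaleR[OF \<beta>lin] .
  have \<beta>\<beta>: "\<beta> (\<beta> v) = of_int d *\<^sub>R v" for v
  proof -
    have "\<beta> (\<beta> v) = ((2 * of_int q) * (2 * of_int q)) *\<^sub>R gm (gm v)"
      by (simp add: \<beta>gm gm_scale)
    also have "\<dots> = ((2 * of_int q) * (2 * of_int q) * (D / 4)) *\<^sub>R v"
      by (simp add: gm_gm D_def)
    also have "(2 * of_int q) * (2 * of_int q) * (D / 4) = (of_int d :: real)"
      using pq by (simp add: d_def field_simps)
    finally show ?thesis .
  qed
  have sQ: "s \<in> \<rat>" using st_rat by simp
  have aQ: "\<alpha> x \<in> latQ L" if "x \<in> latQ L" for x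
    by (rule latQ_map[OF aR aL that])
  have \<beta>Q: "\<beta> x \<in> latQ L" if "x \<in> latQ L" for x
    unfolding \<beta>_def using that aQ sQ by (intro latQ_add latQ_scale) auto
  define \<iota> where "\<iota> z v = of_rat (fst z) *\<^sub>R v + of_rat (snd z) *\<^sub>R \<beta> v" for z :: "rat \<times> rat" and v
  have endq: "\<iota> z \<in> EndQ L" for z
  proof -
    have "C_linear (\<iota> z)"
      unfolding \<iota>_def[abs_def] using C_linear_comb[OF C_linear_id \<beta>lin] by (simp add: id_def)
    moreover have "\<iota> z x \<in> latQ L" if "x \<in> latQ L" for x
      unfolding \<iota>_def using that \<beta>Q by (intro latQ_add latQ_scale) auto
    ultimately show ?thesis unfolding EndQ_def by auto
  qed
  have v0: "b 0 \<noteq> 0" using b_nz by simp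
  have inj: "inj \<iota>"
  proof (rule injI)
    fix z w assume e: "\<iota> z = \<iota> w"
    obtain a1 b1 where z: "z = (a1, b1)" by (cases z)
    obtain a2 b2 where w: "w = (a2, b2)" by (cases w)
    let ?v = "b 0"
    have ev: "of_rat a1 *\<^sub>R ?v + of_rat b1 *\<^sub>R \<beta> ?v = of_rat a2 *\<^sub>R ?v + of_rat b2 *\<^sub>R \<beta> ?v"
      using fun_cong[OF e, of ?v] by (simp add: \<iota>_def z w)
    show "z = w"
    proof (cases "b1 = b2")
      case True
      hence "(of_rat a1 - of_rat a2) *\<^sub>R ?v = 0" using ev by (simp add: algebra_simps)
      hence "a1 = a2" using v0 by simp
      thus ?thesis using True z w by simp
    next
      case False
      define c :: real where "c = (of_rat a2 - of_rat a1) / (of_rat b1 - of_rat b2)"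
      have nz: "(of_rat b1 - of_rat b2 :: real) \<noteq> 0" using False by simp
      have "(of_rat b1 - of_rat b2) *\<^sub>R \<beta> ?v = (of_rat a2 - of_rat a1) *\<^sub>R ?v"
        using ev by (simp add: algebra_simps)
      hence bv: "\<beta> ?v = c *\<^sub>R ?v" using nz unfolding c_def
        by (metis (no_types, lifting) divide_inverse_commute scaleR_scaleR inverse_eq_divide
            scaleR_one left_inverse)
      have cQ: "c \<in> \<rat>" by (simp add: c_def)
      have "of_int d *\<^sub>R ?v = (c * c) *\<^sub>R ?v" using \<beta>\<beta>[of ?v] by (simp add: bv \<beta>R) metis
      hence dc: "of_int d = c * c" using v0 by simp
      have "real_of_int p * of_int q = c * c" using dc unfolding d_def by simp
      hence "D * (of_int q * of_int q) = c * c" using Dq by (metis mult.assoc)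
      hence "D = (c / of_int q)^2"
        using pq(1) by (simp add: power2_eq_square field_simps)
      moreover have "c / of_int q \<in> \<rat>" using cQ by simp
      ultimately show ?thesis using Dns by blast
    qed
  qed
  have one: "\<iota> (1, 0) = id" by (simp add: \<iota>_def fun_eq_iff)
  have add: "\<iota> (z + w) = (\<lambda>v. \<iota> z v + \<iota> w v)" for z w
    by (simp add: \<iota>_def fun_eq_iff of_rat_add algebra_simps)
  have mult: "\<iota> (qd_mult d z w) = \<iota> z \<circ> \<iota> w" for z w
  proof (rule ext)
    fix v
    show "\<iota> (qd_mult d z w) v = (\<iota> z \<circ> \<iota> w) v"
      by (simp add: \<iota>_def qd_mult_def \<beta>add \<beta>R \<beta>\<beta> of_rat_add of_rat_mult algebra_simps scaleR_scaleR)
  qed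
  show ?thesis unfolding real_multiplication_def
    using d2 sq endq inj one add mult by blast
qed

end

theorem lemma2:
  fixes L :: "cvec set" and \<theta> \<theta>' :: "cvec \<Rightarrow> cvec \<Rightarrow> complex"
  assumes "abelian_surface L"
    and "\<theta> \<in> NS L" and "\<theta>' \<in> NS L"
    and "principal_polarization L \<theta>" and "principal_polarization L \<theta>'"
    and "\<theta> \<noteq> \<theta>'"
  shows "real_multiplication L"
proof -
  obtain b where bb: "inj_on b {..<4}" "independent (b ` {..<4})"
    "L = {(\<Sum>i<4. of_int (n i) *\<^sub>R b i) | n :: nat \<Rightarrow> int. True}"
    using assms(1) unfolding abelian_surface_def is_lattice_def by blast
  interpret lat L b using bb by unfold_locales
  have h1: "hermitian_form \<theta>" and pd1: "positive_definite \<theta>"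
    using assms(4) by (auto simp: principal_polarization_def polarization_def NS_def)
  have h2: "hermitian_form \<theta>'" and pd2: "positive_definite \<theta>'"
    using assms(5) by (auto simp: principal_polarization_def polarization_def NS_def)
  obtain \<alpha> s t where A: "C_linear \<alpha>" "\<forall>x y. \<theta>' x y = \<theta> (\<alpha> x) y"
    "\<forall>x. \<alpha> (\<alpha> x) = s *\<^sub>R \<alpha> x - t *\<^sub>R x"
    using exists_alpha[OF h1 h2 pd1] by blast
  obtain \<alpha>' where A': "C_linear \<alpha>'" "\<forall>x y. \<theta> x y = \<theta>' (\<alpha>' x) y"
    using exists_alpha[OF h2 h1 pd2] by blast
  have aL: "\<alpha> x \<in> L" if "x \<in> L" for x
    by (rule alpha_L[OF assms(4) assms(3) _ that]) (use A in blast)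
  have aL': "\<alpha>' x \<in> L" if "x \<in> L" for x
    by (rule alpha_L[OF assms(5) assms(2) _ that]) (use A' in blast)
  interpret rmset L b \<theta> \<theta>' \<alpha> \<alpha>' s t
    apply unfold_locales
    using h1 h2 pd1 pd2 A A' aL aL' assms(6) by blast+
  show ?thesis by (rule final)
qed

end
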